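(* Let $D$ be an integral domain with quotient field $K$, $\mathcal S$ a multiplicative subset of $D[X]$ ($0\notin\mathcal S$), $\circlearrowleft_{\mathcal S}$ the semistar operation $E\mapsto ED[X]_{\mathcal S}\cap K$ on $D$, $R:=D^{\circlearrowleft_{\mathcal S}}$, and $\iota:D\hookrightarrow R$ the inclusion. Then $R$ is $t$-linked to $(D,\circlearrowleft_{\mathcal S})$, and $\mathcal S\subseteq\mathcal N^{v_R}$ (equivalently, $(\circlearrowleft_{\mathcal S})_\iota$ is a (semi)star operation on $R$). Moreover, $(\circlearrowleft_{\mathcal S})_\iota=w_R$ if and only if the extended saturation $\mathcal S^{\sharp_R}$ of $\mathcal S$ in $R[X]$ equals $\mathcal N^{v_R}$.
   Context: $\overline{\boldsymbol F}(A)$ is the set of nonzero $A$-submodules of $K$ for a domain $A$ with quotient field $K$. A semistar operation on $A$ is a map $\star:\overline{\boldsymbol F}(A)\to\overline{\boldsymbol F}(A)$ with $(xE)^\star=xE^\star$ for $0\ne x\in K$, $E\subseteq F\Rightarrow E^\star\subseteq F^\star$, $E\subseteq E^\star$, $(E^\star)^\star=E^\star$; it is a (semi)star operation if $A^\star=A$. For an overring $R$ of $D$ and a semistar operation $\star$ on $D$, $\star_\iota$ is the semistar operation on $R$ given by $E^{\star_\iota}=E^\star$ for $E\in\overline{\boldsymbol F}(R)\subseteq\overline{\boldsymbol F}(D)$. $v_R$: $E\mapsto(R:(R:E))$; $t_R$ is its finite-type version $E^{t_R}=\bigcup\{F^{v_R}\mid F\subseteq E$ nonzero finitely generated$\}$;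 $w_R$ is the operation $E\mapsto\bigcap\{ER_P\mid P$ a maximal $t_R$-ideal of $R\}$. For $g\in R[X]$, $\mathrm{c}_R(g)$ is the ideal generated by its coefficients, and $\mathcal N^{v_R}=\{g\in R[X]\mid g\neq0,\ \mathrm{c}_R(g)^{v_R}=R\}$. An overring $R$ is $t$-linked to $(D,\star)$ if for each nonzero finitely generated ideal $I$ of $D$, $I^\star=D^\star$ implies $(IR)^{t_R}=R$. For a multiplicative set $\mathcal S\subseteq R[X]$, its extended saturation in $R[X]$ is $R[X]\setminus\bigcup\{P[X]\mid P\in\mathrm{Spec}(R),\ P[X]\cap\mathcal S=\emptyset\}$. *)

theory Defs
  imports "HOL-Computational_Algebra.Polynomial"
begin

text \<open>The quotient field K is the ambient type 'k; the domain D and its overrings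
are subsets of 'k.  Polynomials over a subset A are the K-polynomials whose
coefficients all lie in A.\<close>

definition subring :: "'k::field set \<Rightarrow> bool" where
  "subring A \<longleftrightarrow> 0 \<in> A \<and> 1 \<in> A \<and> (\<forall>x\<in>A. \<forall>y\<in>A. x + y \<in> A \<and> x * y \<in> A \<and> - x \<in> A)"

definition domain_with_qf :: "'k::field set \<Rightarrow> bool" where
  "domain_with_qf D \<longleftrightarrow> subring D \<and> (\<forall>x. \<exists>a\<in>D. \<exists>b\<in>D. b \<noteq> 0 \<and> x = a / b)"

definition polys_over :: "'k::field set \<Rightarrow> 'k poly set" where
  "polys_over A = {p. \<forall>i. coeff p i \<in> A}"

definition mult_subset :: "'k::field set \<Rightarrow> 'k poly set \<Rightarrow> bool" where
  "mult_subset D S \<longleftrightarrow> S \<subseteq> polys_over D \<and> 1 \<in> S \<and> 0 \<notin> S \<and>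
     (\<forall>f\<in>S. \<forall>g\<in>S. f * g \<in> S)"

definition submod :: "'k::field set \<Rightarrow> 'k set \<Rightarrow> bool" where
  "submod A E \<longleftrightarrow> 0 \<in> E \<and> (\<forall>x\<in>E. \<forall>y\<in>E. x + y \<in> E) \<and> (\<forall>a\<in>A. \<forall>x\<in>E. a * x \<in> E)"

definition Fbar :: "'k::field set \<Rightarrow> 'k set set" where
  "Fbar A = {E. submod A E \<and> E \<noteq> {0}}"

definition gen :: "'k::field set \<Rightarrow> 'k set \<Rightarrow> 'k set" where
  "gen A G = {x. \<exists>F c. finite F \<and> F \<subseteq> G \<and> (\<forall>g\<in>F. c g \<in> A) \<and> x = (\<Sum>g\<in>F. c g * g)}"

definition fin_gen :: "'k::field set \<Rightarrow> 'k set \<Rightarrow> bool" where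
  "fin_gen A F \<longleftrightarrow> (\<exists>G. finite G \<and> F = gen A G)"

definition is_ideal :: "'k::field set \<Rightarrow> 'k set \<Rightarrow> bool" where
  "is_ideal A I \<longleftrightarrow> submod A I \<and> I \<subseteq> A"

definition prime_ideal :: "'k::field set \<Rightarrow> 'k set \<Rightarrow> bool" where
  "prime_ideal A P \<longleftrightarrow> is_ideal A P \<and> P \<noteq> A \<and> (\<forall>a\<in>A. \<forall>b\<in>A. a * b \<in> P \<longrightarrow> a \<in> P \<or> b \<in> P)"

text \<open>The semistar operation E |-> E D[X]_S \<inter> K.  Here E D[X] is the
D[X]-submodule of K[X] generated by E, and x \<in> K lies in E D[X]_S iff
x * s \<in> E D[X] for some s \<in> S.\<close>
definition ext_poly_mod :: "'k::field set \<Rightarrow> 'k set \<Rightarrow> 'k poly set" where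
  "ext_poly_mod D E = {f. \<exists>(J::nat set) a h. finite J \<and> (\<forall>j\<in>J. a j \<in> E \<and> h j \<in> polys_over D) \<and>
       f = (\<Sum>j\<in>J. [:a j:] * h j)}"

definition circ :: "'k::field set \<Rightarrow> 'k poly set \<Rightarrow> 'k set \<Rightarrow> 'k set" where
  "circ D S E = {x. \<exists>s\<in>S. [:x:] * s \<in> ext_poly_mod D E}"

definition colon :: "'k::field set \<Rightarrow> 'k set \<Rightarrow> 'k set" where
  "colon A E = {x. \<forall>e\<in>E. x * e \<in> A}"

definition v_op :: "'k::field set \<Rightarrow> 'k set \<Rightarrow> 'k set" where
  "v_op A E = colon A (colon A E)"

definition t_op :: "'k::field set \<Rightarrow> 'k set \<Rightarrow> 'k set" where
  "t_op A E = \<Union>{v_op A F | F. F \<subseteq> E \<and> F \<noteq> {0} \<and> fin_gen A F}"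

definition t_ideal :: "'k::field set \<Rightarrow> 'k set \<Rightarrow> bool" where
  "t_ideal A P \<longleftrightarrow> is_ideal A P \<and> P \<noteq> {0} \<and> t_op A P = P"

definition max_t_ideal :: "'k::field set \<Rightarrow> 'k set \<Rightarrow> bool" where
  "max_t_ideal A P \<longleftrightarrow> t_ideal A P \<and> P \<noteq> A \<and>
     (\<forall>Q. t_ideal A Q \<and> Q \<noteq> A \<and> P \<subseteq> Q \<longrightarrow> Q = P)"

definition loc :: "'k::field set \<Rightarrow> 'k set \<Rightarrow> 'k set \<Rightarrow> 'k set" where
  "loc A E P = {x. \<exists>e\<in>E. \<exists>s\<in>A - P. x = e / s}"

definition w_op :: "'k::field set \<Rightarrow> 'k set \<Rightarrow> 'k set" where
  "w_op A E = \<Inter>{loc A E P | P. max_t_ideal A P}"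

definition content_ideal :: "'k::field set \<Rightarrow> 'k poly \<Rightarrow> 'k set" where
  "content_ideal A g = gen A (range (coeff g))"

definition Nv :: "'k::field set \<Rightarrow> 'k poly set" where
  "Nv A = {g. g \<in> polys_over A \<and> g \<noteq> 0 \<and> v_op A (content_ideal A g) = A}"

definition t_linked :: "'k::field set \<Rightarrow> ('k set \<Rightarrow> 'k set) \<Rightarrow> 'k set \<Rightarrow> bool" where
  "t_linked D star R \<longleftrightarrow>
     (\<forall>I. is_ideal D I \<and> I \<noteq> {0} \<and> fin_gen D I \<and> star I = star D \<longrightarrow> t_op R (gen R I) = R)"

definition ext_sat :: "'k::field set \<Rightarrow> 'k poly set \<Rightarrow> 'k poly set" where
  "ext_sat A S = polys_over A -
     \<Union>{polys_over P | P. prime_ideal A P \<and> polys_over P \<inter> S = {}}"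

end

theory Submission imports Defs begin

lemma subringD:
  assumes "subring A"
  shows "0 \<in> A" "1 \<in> A" "x \<in> A \<Longrightarrow> y \<in> A \<Longrightarrow> x + y \<in> A"
    "x \<in> A \<Longrightarrow> y \<in> A \<Longrightarrow> x * y \<in> A" "x \<in> A \<Longrightarrow> - x \<in> A"
  using assms unfolding subring_def by auto

lemma submod_sum:
  assumes "submod A E" "\<And>x. x \<in> F \<Longrightarrow> f x \<in> E"
  shows "sum f F \<in> E"
  using assms(2)
proof (induction F rule: infinite_finite_induct)
  case (infinite F) then show ?case using assms(1) by (simp add: submod_def)
next
  case empty then show ?case using assms(1) by (simp add: submod_def)
next
  case (insert x F) then show ?case using assms(1) by (simp add: submod_def)
qed

lemma subring_submod: "subring A \<Longrightarrow> submod A A"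
  unfolding subring_def submod_def by auto

lemma ideal_submod_mono: "submod A E \<Longrightarrow> B \<subseteq> A \<Longrightarrow> submod B E"
  unfolding submod_def by auto

lemma gen_sub:
  assumes "submod A E" "G \<subseteq> E"
  shows "gen A G \<subseteq> E"
proof
  fix x assume "x \<in> gen A G"
  then obtain F c where F: "finite F" "F \<subseteq> G" "\<forall>g\<in>F. c g \<in> A" "x = (\<Sum>g\<in>F. c g * g)"
    unfolding gen_def by blast
  show "x \<in> E" unfolding F(4)
    by (rule submod_sum[OF assms(1)]) (use F assms in \<open>auto simp: submod_def\<close>)
qed

lemma gen_mono: "G \<subseteq> H \<Longrightarrow> gen A G \<subseteq> gen A H"
  unfolding gen_def by blast

lemma gen_base:
  assumes "1 \<in> A" shows "G \<subseteq> gen A G"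
proof
  fix g assume "g \<in> G"
  then show "g \<in> gen A G" unfolding gen_def
    by (intro CollectI exI[of _ "{g}"] exI[of _ "\<lambda>_. 1"]) (use assms in auto)
qed

lemma gen_submod:
  assumes "subring A" shows "submod A (gen A G)"
  unfolding submod_def
proof (intro conjI ballI)
  show "0 \<in> gen A G" unfolding gen_def by (intro CollectI exI[of _ "{}"]) auto
next
  fix x y assume "x \<in> gen A G" "y \<in> gen A G"
  then obtain F1 c1 F2 c2 where F: "finite F1" "F1 \<subseteq> G" "\<forall>g\<in>F1. c1 g \<in> A" "x = (\<Sum>g\<in>F1. c1 g * g)"
     "finite F2" "F2 \<subseteq> G" "\<forall>g\<in>F2. c2 g \<in> A" "y = (\<Sum>g\<in>F2. c2 g * g)"
    unfolding gen_def by blast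
  define c where "c g = (if g \<in> F1 then c1 g else 0) + (if g \<in> F2 then c2 g else 0)" for g
  have fin: "finite (F1 \<union> F2)" using F by auto
  have "(\<Sum>g\<in>F1 \<union> F2. c g * g) = (\<Sum>g\<in>F1 \<union> F2. (if g \<in> F1 then c1 g * g else 0))
        + (\<Sum>g\<in>F1 \<union> F2. (if g \<in> F2 then c2 g * g else 0))"
    unfolding sum.distrib[symmetric] by (rule sum.cong) (auto simp: c_def distrib_right)
  also have "\<dots> = x + y"
  proof -
    have e1: "(\<Sum>g\<in>F1 \<union> F2. (if g \<in> F1 then c1 g * g else 0)) = x"
    proof -
      have "(\<Sum>g\<in>F1 \<union> F2. (if g \<in> F1 then c1 g * g else 0)) = (\<Sum>g\<in>(F1 \<union> F2) \<inter> F1. c1 g * g)"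
        by (rule sum.inter_restrict[OF fin, symmetric])
      also have "(F1 \<union> F2) \<inter> F1 = F1" by blast
      finally show ?thesis unfolding F(4) .
    qed
    have e2: "(\<Sum>g\<in>F1 \<union> F2. (if g \<in> F2 then c2 g * g else 0)) = y"
    proof -
      have "(\<Sum>g\<in>F1 \<union> F2. (if g \<in> F2 then c2 g * g else 0)) = (\<Sum>g\<in>(F1 \<union> F2) \<inter> F2. c2 g * g)"
        by (rule sum.inter_restrict[OF fin, symmetric])
      also have "(F1 \<union> F2) \<inter> F2 = F2" by blast
      finally show ?thesis unfolding F(8) .
    qed
    show ?thesis unfolding e1 e2 ..
  qed
  finally have eq: "x + y = (\<Sum>g\<in>F1 \<union> F2. c g * g)" by (rule sym)
  have cA: "\<forall>g\<in>F1 \<union> F2. c g \<in> A"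
    using F(3,7) assms by (auto simp: c_def subring_def)
  have sub: "F1 \<union> F2 \<subseteq> G" using F(2,6) by blast
  show "x + y \<in> gen A G" unfolding gen_def
    by (rule CollectI, rule exI[of _ "F1 \<union> F2"], rule exI[of _ c]) (use fin sub cA eq in blast)
next
  fix a x assume a: "a \<in> A" and "x \<in> gen A G"
  then obtain F c where F: "finite F" "F \<subseteq> G" "\<forall>g\<in>F. c g \<in> A" "x = (\<Sum>g\<in>F. c g * g)"
    unfolding gen_def by blast
  have "a * x = (\<Sum>g\<in>F. (a * c g) * g)" unfolding F(4) by (simp add: sum_distrib_left mult.assoc)
  moreover have "\<forall>g\<in>F. a * c g \<in> A" using F a assms by (auto simp: subring_def)
  ultimately show "a * x \<in> gen A G" unfolding gen_def
    by (intro CollectI exI[of _ F] exI[of _ "\<lambda>g. a * c g"]) (use F(1,2) in blast)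
qed

lemma colon_anti: "F \<subseteq> G \<Longrightarrow> colon A G \<subseteq> colon A F"
  unfolding colon_def by auto

lemma v_mono: "F \<subseteq> G \<Longrightarrow> v_op A F \<subseteq> v_op A G"
  unfolding v_op_def by (intro colon_anti)

lemma colon_ext: "F \<subseteq> colon A (colon A F)"
  unfolding colon_def by (auto simp: mult.commute)

lemma v_ext: "F \<subseteq> v_op A F"
  unfolding v_op_def by (rule colon_ext)

lemma v_sub: assumes "F \<subseteq> A" shows "v_op A F \<subseteq> A"
proof
  fix x assume x: "x \<in> v_op A F"
  have "1 \<in> colon A F" using assms unfolding colon_def by auto
  then have "x * 1 \<in> A" using x unfolding v_op_def colon_def by blast
  then show "x \<in> A" by simp
qed

lemma v_idem: "v_op A (v_op A F) = v_op A F"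
proof -
  have "colon A (v_op A F) = colon A F"
  proof
    show "colon A (v_op A F) \<subseteq> colon A F" by (rule colon_anti[OF v_ext])
    show "colon A F \<subseteq> colon A (v_op A F)" unfolding v_op_def by (rule colon_ext)
  qed
  then show ?thesis by (simp add: v_op_def)
qed

lemma v_submod:
  assumes "subring A" shows "submod A (v_op A F)"
  using assms unfolding submod_def v_op_def colon_def subring_def
  by (auto simp: distrib_right mult.assoc)

lemma v_one:
  assumes "subring A" "1 \<in> v_op A F" "F \<subseteq> A"
  shows "v_op A F = A"
proof
  show "v_op A F \<subseteq> A" by (rule v_sub[OF assms(3)])
  show "A \<subseteq> v_op A F"
  proof
    fix r assume "r \<in> A"
    then show "r \<in> v_op A F" using v_submod[OF assms(1)] assms(2) unfolding submod_def
      by (metis mult.right_neutral)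
  qed
qed

lemma v_self: "subring A \<Longrightarrow> v_op A A = A"
  by (rule v_one) (auto intro: v_ext[THEN subsetD] dest: subringD)


lemma range_coeff_finite: "finite (range (coeff g))"
proof -
  have "range (coeff g) \<subseteq> insert 0 (coeff g ` {..degree g})"
  proof
    fix c assume "c \<in> range (coeff g)"
    then obtain i where "c = coeff g i" by blast
    then show "c \<in> insert 0 (coeff g ` {..degree g})"
      by (cases "i \<le> degree g") (auto simp: coeff_eq_0)
  qed
  then show ?thesis by (rule finite_subset) auto
qed

lemma polys_over_mono: "A \<subseteq> B \<Longrightarrow> polys_over A \<subseteq> polys_over B"
  unfolding polys_over_def by auto

lemma polys_over_mult:
  assumes "submod D A" "p \<in> polys_over A" "q \<in> polys_over D"
  shows "p * q \<in> polys_over A"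
  unfolding polys_over_def
proof (intro CollectI allI)
  fix n
  show "coeff (p * q) n \<in> A" unfolding coeff_mult
  proof (rule submod_sum[OF assms(1)])
    fix i
    have "coeff q (n - i) * coeff p i \<in> A"
      using assms unfolding submod_def polys_over_def by auto
    then show "coeff p i * coeff q (n - i) \<in> A" by (simp add: mult.commute)
  qed
qed

lemma polys_over_sum:
  assumes "submod A E" "\<And>x. x \<in> F \<Longrightarrow> f x \<in> polys_over E"
  shows "sum f F \<in> polys_over E"
  unfolding polys_over_def
proof (intro CollectI allI)
  fix i show "coeff (sum f F) i \<in> E" unfolding coeff_sum
    by (rule submod_sum[OF assms(1)]) (use assms(2) in \<open>auto simp: polys_over_def\<close>)
qed

lemma monom_polys: "subring D \<Longrightarrow> monom 1 i \<in> polys_over D"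
  unfolding polys_over_def by (auto simp: subring_def)

lemma one_polys: "subring D \<Longrightarrow> 1 \<in> polys_over D"
  unfolding polys_over_def by (auto simp: subring_def coeff_1)

lemma ext_poly_mod_eq:
  assumes D: "subring D" and E: "submod D E"
  shows "ext_poly_mod D E = polys_over E"
proof
  show "ext_poly_mod D E \<subseteq> polys_over E"
  proof
    fix f assume "f \<in> ext_poly_mod D E"
    then obtain J :: "nat set" and a h where J: "finite J" "\<forall>j\<in>J. a j \<in> E \<and> h j \<in> polys_over D"
      "f = (\<Sum>j\<in>J. [:a j:] * h j)" unfolding ext_poly_mod_def by blast
    show "f \<in> polys_over E" unfolding J(3)
    proof (rule polys_over_sum[OF E])
      fix j assume "j \<in> J"
      then have "[:a j:] \<in> polys_over E" "h j \<in> polys_over D"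
        using J(2) E unfolding polys_over_def submod_def by (auto simp: coeff_pCons split: nat.split)
      then show "[:a j:] * h j \<in> polys_over E" by (rule polys_over_mult[OF E])
    qed
  qed
next
  show "polys_over E \<subseteq> ext_poly_mod D E"
  proof
    fix f assume f: "f \<in> polys_over E"
    have eq: "f = (\<Sum>i\<in>{..degree f}. [:coeff f i:] * monom 1 i)"
      by (simp add: smult_monom poly_as_sum_of_monoms)
    have "\<forall>i\<in>{..degree f}. coeff f i \<in> E \<and> monom 1 i \<in> polys_over D"
      using f monom_polys[OF D] unfolding polys_over_def by auto
    then show "f \<in> ext_poly_mod D E" unfolding ext_poly_mod_def
      by (intro CollectI exI[of _ "{..degree f}"] exI[of _ "coeff f"] exI[of _ "\<lambda>i. monom 1 i"] conjI eq)
        simp_all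
  qed
qed

lemma circ_iff:
  assumes "subring D" "submod D E"
  shows "x \<in> circ D S E \<longleftrightarrow> (\<exists>s\<in>S. \<forall>i. x * coeff s i \<in> E)"
  unfolding circ_def ext_poly_mod_eq[OF assms] polys_over_def by simp

lemma prod_in_S:
  assumes "mult_subset D S" "\<And>i. i \<in> I \<Longrightarrow> t i \<in> S"
  shows "prod t I \<in> S"
  using assms(2)
proof (induction I rule: infinite_finite_induct)
  case (infinite A) then show ?case using assms(1) by (simp add: mult_subset_def)
next
  case empty then show ?case using assms(1) by (simp add: mult_subset_def)
next
  case (insert x F) then show ?case using assms(1) by (simp add: mult_subset_def)
qed

lemma KEY:
  assumes D: "subring D" and S: "mult_subset D S" and s: "s \<in> S"
    and x: "\<And>i. x * coeff s i \<in> circ D S D"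
  shows "x \<in> circ D S D"
proof -
  have DD: "submod D D" by (rule subring_submod[OF D])
  have "\<forall>i. \<exists>t\<in>S. \<forall>j. x * coeff s i * coeff t j \<in> D"
    using x circ_iff[OF D DD] by blast
  then obtain t where t: "\<And>i. t i \<in> S" "\<And>i j. x * coeff s i * coeff (t i) j \<in> D"
    by metis
  define T where "T = prod t {..degree s}"
  have TS: "T \<in> S" unfolding T_def by (rule prod_in_S[OF S]) (use t in auto)
  have sT: "s * T \<in> S" using S s TS unfolding mult_subset_def by blast
  have SD: "\<And>u. u \<in> S \<Longrightarrow> u \<in> polys_over D" using S unfolding mult_subset_def by blast
  have main: "x * coeff s i * coeff T m \<in> D" for i m
  proof (cases "i \<le> degree s")
    case False then show ?thesis using D by (simp add: coeff_eq_0 subring_def)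
  next
    case True
    define T' where "T' = prod t ({..degree s} - {i})"
    have T'S: "T' \<in> S" unfolding T'_def by (rule prod_in_S[OF S]) (use t in auto)
    have "T = t i * T'" unfolding T_def T'_def using True by (simp add: prod.remove)
    then have eqT: "x * coeff s i * coeff T m = coeff (smult (x * coeff s i) (t i) * T') m"
      by (simp add: mult_smult_left)
    have "smult (x * coeff s i) (t i) \<in> polys_over D"
      using t(2) unfolding polys_over_def by simp
    then have "smult (x * coeff s i) (t i) * T' \<in> polys_over D"
      by (rule polys_over_mult[OF DD _ SD[OF T'S]])
    then have cD: "coeff (smult (x * coeff s i) (t i) * T') m \<in> D"
      unfolding polys_over_def by blast
    show ?thesis unfolding eqT by (rule cD)
  qed
  have "\<forall>n. x * coeff (s * T) n \<in> D"
  proof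
    fix n
    have "x * coeff (s * T) n = (\<Sum>i\<le>n. x * coeff s i * coeff T (n - i))"
      by (simp add: coeff_mult sum_distrib_left mult.assoc)
    also have "\<dots> \<in> D" by (rule submod_sum[OF DD]) (rule main)
    finally show "x * coeff (s * T) n \<in> D" .
  qed
  then show ?thesis using circ_iff[OF D DD] sT by blast
qed


lemma coeff_1_mem: "subring D \<Longrightarrow> coeff 1 i \<in> D"
  by (auto simp: coeff_1 subring_def)

lemma R_iff:
  assumes "subring D"
  shows "x \<in> circ D S D \<longleftrightarrow> (\<exists>s\<in>S. \<forall>i. x * coeff s i \<in> D)"
  by (rule circ_iff[OF assms subring_submod[OF assms]])

lemma D_sub_R:
  assumes D: "subring D" and S: "mult_subset D S"
  shows "D \<subseteq> circ D S D"
proof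
  fix x assume x: "x \<in> D"
  have "1 \<in> S" using S by (simp add: mult_subset_def)
  moreover have "\<forall>i. x * coeff 1 i \<in> D" using x D by (auto simp: coeff_1 subring_def)
  ultimately show "x \<in> circ D S D" using R_iff[OF D] by blast
qed

lemma R_subring:
  assumes D: "subring D" and S: "mult_subset D S"
  shows "subring (circ D S D)"
proof -
  let ?R = "circ D S D"
  have DD: "submod D D" by (rule subring_submod[OF D])
  have SD: "\<And>u. u \<in> S \<Longrightarrow> u \<in> polys_over D" using S unfolding mult_subset_def by blast
  have Smul: "\<And>u v. u \<in> S \<Longrightarrow> v \<in> S \<Longrightarrow> u * v \<in> S" using S unfolding mult_subset_def by blast
  have sm: "smult x s * t \<in> polys_over D" if "s \<in> S" "t \<in> S" "\<forall>i. x * coeff s i \<in> D" for x s t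
    by (rule polys_over_mult[OF DD _ SD[OF that(2)]]) (use that(3) in \<open>simp add: polys_over_def\<close>)
  have z: "0 \<in> ?R" "1 \<in> ?R" using D_sub_R[OF D S] subringD(1,2)[OF D] by blast+
  have add: "x + y \<in> ?R \<and> x * y \<in> ?R" if xy: "x \<in> ?R" "y \<in> ?R" for x y
  proof -
    obtain s where s: "s \<in> S" "\<forall>i. x * coeff s i \<in> D"
      using R_iff[OF D, THEN iffD1, OF xy(1)] by blast
    obtain t where t: "t \<in> S" "\<forall>i. y * coeff t i \<in> D"
      using R_iff[OF D, THEN iffD1, OF xy(2)] by blast
    note st = s t
    have p1: "smult x s * t \<in> polys_over D" by (rule sm) (use st in auto)
    have p2: "smult y t * s \<in> polys_over D" by (rule sm) (use st in auto)
    have "\<forall>i. (x + y) * coeff (s * t) i \<in> D"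
    proof
      fix i
      have "(x + y) * coeff (s * t) i = coeff (smult x s * t) i + coeff (smult y t * s) i"
        by (simp add: distrib_right mult.commute)
      moreover have "coeff (smult x s * t) i \<in> D" "coeff (smult y t * s) i \<in> D"
        using p1 p2 unfolding polys_over_def by blast+
      ultimately show "(x + y) * coeff (s * t) i \<in> D"
        using subringD(3)[OF D] by simp
    qed
    then have a: "x + y \<in> ?R" by (intro R_iff[OF D, THEN iffD2] bexI[OF _ Smul[OF st(1,3)]])
    have p3: "smult x s * smult y t \<in> polys_over D"
      by (rule polys_over_mult[OF DD]) (use st in \<open>simp_all add: polys_over_def\<close>)
    have "\<forall>i. (x * y) * coeff (s * t) i \<in> D"
    proof
      fix i
      have eq: "(x * y) * coeff (s * t) i = coeff (smult x s * smult y t) i"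
        by (simp add: mult.commute mult.left_commute)
      have c: "coeff (smult x s * smult y t) i \<in> D" using p3 unfolding polys_over_def by blast
      show "(x * y) * coeff (s * t) i \<in> D" unfolding eq by (rule c)
    qed
    then have m: "x * y \<in> ?R" by (intro R_iff[OF D, THEN iffD2] bexI[OF _ Smul[OF st(1,3)]])
    show ?thesis using a m by blast
  qed
  have neg: "- x \<in> ?R" if xR: "x \<in> ?R" for x
  proof -
    obtain s where st: "s \<in> S" "\<forall>i. x * coeff s i \<in> D"
      using R_iff[OF D, THEN iffD1, OF xR] by blast
    have "\<forall>i. (- x) * coeff s i \<in> D"
    proof
      fix i have "- (x * coeff s i) \<in> D" using st(2) subringD(5)[OF D] by blast
      then show "(- x) * coeff s i \<in> D" by simp
    qed
    then show "- x \<in> ?R" by (intro R_iff[OF D, THEN iffD2] bexI[OF _ st(1)])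
  qed
  show ?thesis unfolding subring_def using z add neg by blast
qed

lemma submod_D_of_R:
  assumes D: "subring D" and S: "mult_subset D S" and E: "submod (circ D S D) E"
  shows "submod D E"
  by (rule ideal_submod_mono[OF E D_sub_R[OF D S]])

lemma circ_R:
  assumes D: "subring D" and S: "mult_subset D S"
  shows "circ D S (circ D S D) = circ D S D"
proof -
  let ?R = "circ D S D"
  have RR: "submod D ?R"
    by (rule submod_D_of_R[OF D S subring_submod[OF R_subring[OF D S]]])
  show ?thesis
  proof
    show "circ D S ?R \<subseteq> ?R"
    proof
      fix x assume "x \<in> circ D S ?R"
      then obtain s where "s \<in> S" "\<forall>i. x * coeff s i \<in> ?R" using circ_iff[OF D RR] by blast
      then show "x \<in> ?R" using KEY[OF D S] by blast
    qed
    show "?R \<subseteq> circ D S ?R"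
    proof
      fix x assume x: "x \<in> ?R"
      have "1 \<in> S" using S by (simp add: mult_subset_def)
      moreover have "\<forall>i. x * coeff 1 i \<in> ?R"
        using x R_subring[OF D S] by (auto simp: coeff_1 subring_def)
      ultimately show "x \<in> circ D S ?R" using circ_iff[OF D RR] by blast
    qed
  qed
qed

lemma content_sub:
  "submod A E \<Longrightarrow> (\<And>i. coeff g i \<in> E) \<Longrightarrow> content_ideal A g \<subseteq> E"
  unfolding content_ideal_def by (rule gen_sub) auto

lemma coeff_in_content: "1 \<in> A \<Longrightarrow> coeff g i \<in> content_ideal A g"
  unfolding content_ideal_def using gen_base[of A "range (coeff g)"] by auto

lemma content_ne: "1 \<in> A \<Longrightarrow> g \<noteq> 0 \<Longrightarrow> content_ideal A g \<noteq> {0}"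
  using coeff_in_content[of A g "degree g"] leading_coeff_neq_0[of g] by auto

lemma content_fin: "fin_gen A (content_ideal A g)"
  unfolding fin_gen_def content_ideal_def using range_coeff_finite by blast

lemma colon_self: assumes "subring A" shows "colon A A = A"
proof
  show "colon A A \<subseteq> A"
  proof
    fix y assume "y \<in> colon A A"
    then have "y * 1 \<in> A" using assms unfolding colon_def subring_def by blast
    then show "y \<in> A" by simp
  qed
  show "A \<subseteq> colon A A" using assms unfolding colon_def subring_def by blast
qed

lemma t_op_intro: "F \<subseteq> E \<Longrightarrow> F \<noteq> {0} \<Longrightarrow> fin_gen A F \<Longrightarrow> v_op A F \<subseteq> t_op A E"
  unfolding t_op_def by blast

lemma S_Nv:
  assumes D: "subring D" and S: "mult_subset D S" and s: "s \<in> S"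
  shows "s \<in> Nv (circ D S D)"
proof -
  let ?R = "circ D S D"
  have Rs: "subring ?R" by (rule R_subring[OF D S])
  have sD: "s \<in> polys_over D" using S s by (auto simp: mult_subset_def)
  then have sR: "s \<in> polys_over ?R" using polys_over_mono[OF D_sub_R[OF D S]] by blast
  have s0: "s \<noteq> 0" using S s by (auto simp: mult_subset_def)
  have cR: "content_ideal ?R s \<subseteq> ?R"
    by (rule content_sub[OF subring_submod[OF Rs]]) (use sR in \<open>auto simp: polys_over_def\<close>)
  have "colon ?R (content_ideal ?R s) = ?R"
  proof
    show "colon ?R (content_ideal ?R s) \<subseteq> ?R"
    proof
      fix y assume y: "y \<in> colon ?R (content_ideal ?R s)"
      have "\<forall>i. y * coeff s i \<in> ?R"
        using y coeff_in_content[of ?R s] Rs unfolding colon_def subring_def by blast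
      then show "y \<in> ?R" using KEY[OF D S s] by blast
    qed
    show "?R \<subseteq> colon ?R (content_ideal ?R s)"
      using cR Rs unfolding colon_def subring_def by blast
  qed
  then have "v_op ?R (content_ideal ?R s) = ?R"
    unfolding v_op_def using colon_self[OF Rs] by simp
  then show ?thesis using sR s0 unfolding Nv_def by blast
qed

lemma t_op_sub: "E \<subseteq> A \<Longrightarrow> t_op A E \<subseteq> A"
  unfolding t_op_def using v_sub by blast

lemma t_linked_R:
  assumes D: "subring D" and S: "mult_subset D S"
  shows "t_linked D (circ D S) (circ D S D)"
  unfolding t_linked_def
proof (intro allI impI)
  let ?R = "circ D S D"
  have Rs: "subring ?R" by (rule R_subring[OF D S])
  fix I assume I: "is_ideal D I \<and> I \<noteq> {0} \<and> fin_gen D I \<and> circ D S I = circ D S D"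
  have ID: "submod D I" "I \<subseteq> D" using I by (auto simp: is_ideal_def)
  have "1 \<in> ?R" using Rs by (simp add: subring_def)
  then have "1 \<in> circ D S I" using I by simp
  then obtain s where s: "s \<in> S" "\<forall>i. coeff s i \<in> I" using circ_iff[OF D ID(1)] by auto
  have genI: "gen ?R I \<subseteq> ?R"
    by (rule gen_sub[OF subring_submod[OF Rs]]) (use ID(2) D_sub_R[OF D S] in blast)
  have cs: "content_ideal ?R s \<subseteq> gen ?R I"
    unfolding content_ideal_def by (rule gen_mono) (use s(2) in auto)
  have nv: "s \<in> Nv ?R" by (rule S_Nv[OF D S s(1)])
  have ne: "content_ideal ?R s \<noteq> {0}"
    by (rule content_ne) (use Rs nv in \<open>auto simp: subring_def Nv_def\<close>)
  have "v_op ?R (content_ideal ?R s) \<subseteq> t_op ?R (gen ?R I)"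
    by (rule t_op_intro[OF cs ne content_fin])
  then have "?R \<subseteq> t_op ?R (gen ?R I)"
    using nv unfolding Nv_def by simp
  then show "t_op ?R (gen ?R I) = ?R" using t_op_sub[OF genI] by blast
qed


lemma chain_fin:
  assumes "finite G" "G \<subseteq> \<Union>C" "C \<noteq> {}" "\<forall>X\<in>C. \<forall>Y\<in>C. X \<subseteq> Y \<or> Y \<subseteq> X"
  shows "\<exists>Q\<in>C. G \<subseteq> Q"
  using assms(1,2)
proof (induction G rule: finite_induct)
  case empty then show ?case using assms(3) by blast
next
  case (insert x G)
  then obtain Q where Q: "Q \<in> C" "G \<subseteq> Q" by blast
  obtain Q' where Q': "Q' \<in> C" "x \<in> Q'" using insert.prems by blast
  from assms(4) Q(1) Q'(1) have "Q \<subseteq> Q' \<or> Q' \<subseteq> Q" by blast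
  then show ?case
  proof
    assume "Q \<subseteq> Q'" then show ?thesis using Q Q' by blast
  next
    assume "Q' \<subseteq> Q" then show ?thesis using Q Q' by blast
  qed
qed

lemma chain_ideal:
  assumes "C \<noteq> {}" "\<forall>Q\<in>C. is_ideal R Q" "\<forall>X\<in>C. \<forall>Y\<in>C. X \<subseteq> Y \<or> Y \<subseteq> X"
  shows "is_ideal R (\<Union>C)"
  unfolding is_ideal_def submod_def
proof (intro conjI ballI)
  obtain Q where "Q \<in> C" using assms(1) by blast
  then show "0 \<in> \<Union>C" using assms(2) unfolding is_ideal_def submod_def by blast
next
  fix x y assume "x \<in> \<Union>C" "y \<in> \<Union>C"
  then obtain Q1 Q2 where Q: "Q1 \<in> C" "x \<in> Q1" "Q2 \<in> C" "y \<in> Q2" by blast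
  from assms(3) Q(1,3) have "Q1 \<subseteq> Q2 \<or> Q2 \<subseteq> Q1" by blast
  then obtain Q where "Q \<in> C" "x \<in> Q" "y \<in> Q" using Q by blast
  then show "x + y \<in> \<Union>C" using assms(2) unfolding is_ideal_def submod_def by blast
next
  fix a x assume "a \<in> R" "x \<in> \<Union>C"
  then show "a * x \<in> \<Union>C" using assms(2) unfolding is_ideal_def submod_def by blast
next
  show "\<Union>C \<subseteq> R" using assms(2) unfolding is_ideal_def by blast
qed

definition ext_id :: "'k::field set \<Rightarrow> 'k set \<Rightarrow> 'k \<Rightarrow> 'k set" where
  "ext_id R P a = {x. \<exists>p\<in>P. \<exists>r\<in>R. x = p + a * r}"

lemma ext_id:
  assumes R: "subring R" and P: "is_ideal R P" and a: "a \<in> R"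
  shows "is_ideal R (ext_id R P a)" "P \<subseteq> ext_id R P a" "a \<in> ext_id R P a"
proof -
  note Rd = subringD[OF R]
  have PR: "P \<subseteq> R" and Pm: "submod R P" using P by (auto simp: is_ideal_def)
  note Pd = Pm[unfolded submod_def]
  show "P \<subseteq> ext_id R P a"
  proof
    fix p assume "p \<in> P" then show "p \<in> ext_id R P a" unfolding ext_id_def
      using Rd(1) by (intro CollectI bexI[of _ p] bexI[of _ 0]) auto
  qed
  show "a \<in> ext_id R P a" unfolding ext_id_def
    using Rd(2) Pd by (intro CollectI bexI[of _ 0] bexI[of _ 1]) auto
  show "is_ideal R (ext_id R P a)" unfolding is_ideal_def submod_def
  proof (intro conjI ballI)
    show "0 \<in> ext_id R P a" unfolding ext_id_def
      using Rd(1) Pd by (intro CollectI bexI[of _ 0] bexI[of _ 0]) auto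
  next
    fix x y assume "x \<in> ext_id R P a" "y \<in> ext_id R P a"
    then obtain p r p' r' where "p \<in> P" "r \<in> R" "x = p + a * r" "p' \<in> P" "r' \<in> R" "y = p' + a * r'"
      unfolding ext_id_def by blast
    moreover have "x + y = (p + p') + a * (r + r')" using calculation by (simp add: algebra_simps)
    ultimately show "x + y \<in> ext_id R P a" unfolding ext_id_def using Pd Rd(3)
      by (intro CollectI bexI[of _ "p + p'"] bexI[of _ "r + r'"]) auto
  next
    fix b x assume b: "b \<in> R" and "x \<in> ext_id R P a"
    then obtain p r where pr: "p \<in> P" "r \<in> R" "x = p + a * r"
      unfolding ext_id_def by blast
    have "b * x = b * p + a * (b * r)" using pr by (simp add: algebra_simps)
    then show "b * x \<in> ext_id R P a" unfolding ext_id_def using Pd Rd(4) b pr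
      by (intro CollectI bexI[of _ "b * p"] bexI[of _ "b * r"]) auto
  next
    show "ext_id R P a \<subseteq> R"
    proof
      fix x assume "x \<in> ext_id R P a"
      then obtain p r where pr: "p \<in> P" "r \<in> R" "x = p + a * r"
        unfolding ext_id_def by blast
      then show "x \<in> R" using PR Rd(3,4) a by blast
    qed
  qed
qed

lemma polys_over_finite_sub:
  assumes "s \<in> polys_over (\<Union>C)" "C \<noteq> {}" "\<forall>X\<in>C. \<forall>Y\<in>C. X \<subseteq> Y \<or> Y \<subseteq> X"
    "\<forall>Q\<in>C. 0 \<in> Q"
  shows "\<exists>Q\<in>C. s \<in> polys_over Q"
proof -
  have "coeff s ` {..degree s} \<subseteq> \<Union>C" using assms(1) unfolding polys_over_def by blast
  then obtain Q where Q: "Q \<in> C" "coeff s ` {..degree s} \<subseteq> Q"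
    using chain_fin[OF _ _ assms(2,3)] by blast
  have "s \<in> polys_over Q" unfolding polys_over_def
  proof (intro CollectI allI)
    fix i show "coeff s i \<in> Q"
    proof (cases "i \<le> degree s")
      case True then show ?thesis using Q by blast
    next
      case False then show ?thesis using Q assms(4) by (simp add: coeff_eq_0)
    qed
  qed
  then show ?thesis using Q by blast
qed

lemma prime_zorn:
  assumes R: "subring R" and SR: "S \<subseteq> polys_over R" and S1: "1 \<in> S"
    and Smul: "\<And>f g. f \<in> S \<Longrightarrow> g \<in> S \<Longrightarrow> f * g \<in> S"
    and I: "is_ideal R I" and disj: "polys_over I \<inter> S = {}"
  shows "\<exists>P. prime_ideal R P \<and> I \<subseteq> P \<and> polys_over P \<inter> S = {}"
proof -
  define Z where "Z = {Q. is_ideal R Q \<and> I \<subseteq> Q \<and> polys_over Q \<inter> S = {}}"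
  have "\<exists>M\<in>Z. \<forall>X\<in>Z. M \<subseteq> X \<longrightarrow> X = M"
  proof (rule subset_Zorn_nonempty)
    show "Z \<noteq> {}" using I disj unfolding Z_def by blast
  next
    fix C assume C: "C \<noteq> {}" "subset.chain Z C"
    have CZ: "C \<subseteq> Z" and ch: "\<forall>X\<in>C. \<forall>Y\<in>C. X \<subseteq> Y \<or> Y \<subseteq> X"
      using C(2) unfolding subset_chain_def by auto
    have ids: "\<forall>Q\<in>C. is_ideal R Q" using CZ unfolding Z_def by blast
    have "is_ideal R (\<Union>C)" by (rule chain_ideal[OF C(1) ids ch])
    moreover have "I \<subseteq> \<Union>C" using C(1) CZ unfolding Z_def by blast
    moreover have "polys_over (\<Union>C) \<inter> S = {}"
    proof (rule ccontr)
      assume "polys_over (\<Union>C) \<inter> S \<noteq> {}"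
      then obtain s where s: "s \<in> polys_over (\<Union>C)" "s \<in> S" by blast
      have "\<forall>Q\<in>C. 0 \<in> Q" using ids unfolding is_ideal_def submod_def by blast
      then obtain Q where "Q \<in> C" "s \<in> polys_over Q"
        using polys_over_finite_sub[OF s(1) C(1) ch] by blast
      then show False using s(2) CZ unfolding Z_def by blast
    qed
    ultimately show "\<Union>C \<in> Z" unfolding Z_def by blast
  qed
  then obtain P where PZ: "P \<in> Z" and max: "\<forall>X\<in>Z. P \<subseteq> X \<longrightarrow> X = P" by blast
  have P: "is_ideal R P" "I \<subseteq> P" "polys_over P \<inter> S = {}" using PZ unfolding Z_def by auto
  have Pm: "submod R P" and PR: "P \<subseteq> R" using P(1) unfolding is_ideal_def by auto
  note Pd = Pm[unfolded submod_def]
  note Rd = subringD[OF R]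
  have "P \<noteq> R"
  proof
    assume "P = R"
    then have "1 \<in> polys_over P" using one_polys[OF R] by simp
    then show False using P(3) S1 by blast
  qed
  moreover have "\<forall>a\<in>R. \<forall>b\<in>R. a * b \<in> P \<longrightarrow> a \<in> P \<or> b \<in> P"
  proof (intro ballI impI)
    fix a b assume a: "a \<in> R" and b: "b \<in> R" and ab: "a * b \<in> P"
    show "a \<in> P \<or> b \<in> P"
    proof (rule ccontr)
      assume nab: "\<not> (a \<in> P \<or> b \<in> P)"
      have getS: "\<exists>s\<in>S. s \<in> polys_over (ext_id R P c)" if c: "c \<in> R" "c \<notin> P" for c
      proof (rule ccontr)
        assume "\<not> (\<exists>s\<in>S. s \<in> polys_over (ext_id R P c))"
        then have "ext_id R P c \<in> Z" unfolding Z_def using ext_id[OF R P(1) c(1)] P(2) by blast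
        then have "ext_id R P c = P" using max ext_id(2)[OF R P(1) c(1)] by blast
        then show False using ext_id(3)[OF R P(1) c(1)] c(2) by blast
      qed
      obtain s1 where s1: "s1 \<in> S" "s1 \<in> polys_over (ext_id R P a)" using getS a nab by blast
      obtain s2 where s2: "s2 \<in> S" "s2 \<in> polys_over (ext_id R P b)" using getS b nab by blast
      have pm: "u * w \<in> P" if u: "u \<in> ext_id R P a" and w: "w \<in> ext_id R P b" for u w
      proof -
        obtain p r where pr: "p \<in> P" "r \<in> R" "u = p + a * r" using u unfolding ext_id_def by blast
        obtain p' r' where pr': "p' \<in> P" "r' \<in> R" "w = p' + b * r'" using w unfolding ext_id_def by blast
        have eq: "u * w = (p' + b * r') * p + (a * r) * p' + (r * r') * (a * b)"
          using pr pr' by (simp add: algebra_simps)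
        have "p' + b * r' \<in> R" using pr' PR Rd(3,4) b by blast
        then have t1: "(p' + b * r') * p \<in> P" using Pd pr(1) by blast
        have "a * r \<in> R" using Rd(4) a pr(2) by blast
        then have t2: "(a * r) * p' \<in> P" using Pd pr'(1) by blast
        have "r * r' \<in> R" using Rd(4) pr(2) pr'(2) by blast
        then have t3: "(r * r') * (a * b) \<in> P" using Pd ab by blast
        show ?thesis unfolding eq using Pd t1 t2 t3 by blast
      qed
      have "s1 * s2 \<in> polys_over P" unfolding polys_over_def
      proof (intro CollectI allI)
        fix n show "coeff (s1 * s2) n \<in> P" unfolding coeff_mult
          by (rule submod_sum[OF Pm]) (use pm s1(2) s2(2) in \<open>auto simp: polys_over_def\<close>)
      qed
      then show False using P(3) Smul[OF s1(1) s2(1)] by blast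
    qed
  qed
  ultimately have "prime_ideal R P" unfolding prime_ideal_def using P(1) by blast
  then show ?thesis using P by blast
qed


lemma ne0:
  assumes "0 \<in> I" "I \<noteq> {0}" obtains y where "y \<in> I" "y \<noteq> 0"
proof -
  have "\<not> I \<subseteq> {0}" using assms by blast
  then obtain y where "y \<in> I" "y \<notin> {0}" by (auto simp only: subset_iff)
  then show ?thesis using that by simp
qed

lemma ne0I: "y \<in> F \<Longrightarrow> y \<noteq> 0 \<Longrightarrow> F \<noteq> {0}"
  by auto

lemma t_ext:
  assumes A: "subring A" and I: "is_ideal A I" "I \<noteq> {0}"
  shows "I \<subseteq> t_op A I"
proof
  fix x assume x: "x \<in> I"
  have "0 \<in> I" using I(1) unfolding is_ideal_def submod_def by blast
  then obtain y where y: "y \<in> I" "y \<noteq> 0" using I(2) by (rule ne0)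
  let ?F = "gen A {x, y}"
  have Fs: "?F \<subseteq> I" by (rule gen_sub) (use I(1) x y in \<open>auto simp: is_ideal_def\<close>)
  have xy: "{x, y} \<subseteq> ?F" by (rule gen_base) (use subringD(2)[OF A] in blast)
  have "?F \<noteq> {0}" using xy y(2) by (intro ne0I[of y]) auto
  moreover have "fin_gen A ?F" unfolding fin_gen_def by (intro exI[of _ "{x, y}"]) simp
  ultimately have "v_op A ?F \<subseteq> t_op A I" using t_op_intro[OF Fs] by blast
  then show "x \<in> t_op A I" using xy v_ext[of ?F A] by blast
qed

lemma ideal_one:
  assumes "is_ideal A Q" "1 \<in> Q" shows "Q = A"
proof
  show "Q \<subseteq> A" using assms(1) by (simp add: is_ideal_def)
  show "A \<subseteq> Q"
  proof
    fix r assume "r \<in> A"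
    then have "r * 1 \<in> Q" using assms unfolding is_ideal_def submod_def by blast
    then show "r \<in> Q" by simp
  qed
qed

lemma t_opE:
  assumes "y \<in> t_op A E"
  obtains G where "finite G" "gen A G \<subseteq> E" "gen A G \<noteq> {0}" "y \<in> v_op A (gen A G)"
proof -
  obtain F where F: "y \<in> v_op A F" "F \<subseteq> E" "F \<noteq> {0}" "fin_gen A F"
    using assms unfolding t_op_def by blast
  then obtain G where G: "finite G" "F = gen A G" unfolding fin_gen_def by blast
  show ?thesis by (rule that[OF G(1)]) (use F G(2) in simp_all)
qed

lemma t_zorn:
  assumes R: "subring R" and P: "is_ideal R P" "P \<noteq> {0}" and nP: "1 \<notin> t_op R P"
  shows "\<exists>M. max_t_ideal R M \<and> P \<subseteq> M"
proof -
  note Rd = subringD[OF R]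
  define Z where "Z = {Q. is_ideal R Q \<and> P \<subseteq> Q \<and> 1 \<notin> t_op R Q}"
  have "\<exists>M\<in>Z. \<forall>X\<in>Z. M \<subseteq> X \<longrightarrow> X = M"
  proof (rule subset_Zorn_nonempty)
    show "Z \<noteq> {}" using P nP unfolding Z_def by blast
  next
    fix C assume C: "C \<noteq> {}" "subset.chain Z C"
    have CZ: "C \<subseteq> Z" and ch: "\<forall>X\<in>C. \<forall>Y\<in>C. X \<subseteq> Y \<or> Y \<subseteq> X"
      using C(2) unfolding subset_chain_def by auto
    have ids: "\<forall>Q\<in>C. is_ideal R Q" using CZ unfolding Z_def by blast
    have "is_ideal R (\<Union>C)" by (rule chain_ideal[OF C(1) ids ch])
    moreover have "P \<subseteq> \<Union>C" using C(1) CZ unfolding Z_def by blast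
    moreover have "1 \<notin> t_op R (\<Union>C)"
    proof
      assume "1 \<in> t_op R (\<Union>C)"
      then obtain G where G: "finite G" "gen R G \<subseteq> \<Union>C" "gen R G \<noteq> {0}" "1 \<in> v_op R (gen R G)"
        by (rule t_opE)
      have "G \<subseteq> \<Union>C" using G(2) gen_base[OF Rd(2), of G] by blast
      then obtain Q where Q: "Q \<in> C" "G \<subseteq> Q" using chain_fin[OF G(1) _ C(1) ch] by blast
      have "gen R G \<subseteq> Q" by (rule gen_sub) (use Q ids in \<open>auto simp: is_ideal_def\<close>)
      then have "v_op R (gen R G) \<subseteq> t_op R Q"
        using t_op_intro[of "gen R G" Q R] G(3) unfolding fin_gen_def using G(1) by blast
      then show False using G(4) Q(1) CZ unfolding Z_def by blast
    qed
    ultimately show "\<Union>C \<in> Z" unfolding Z_def by blast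
  qed
  then obtain M where MZ: "M \<in> Z" and max: "\<forall>X\<in>Z. M \<subseteq> X \<longrightarrow> X = M" by blast
  have M: "is_ideal R M" "P \<subseteq> M" "1 \<notin> t_op R M" using MZ unfolding Z_def by auto
  have MR: "M \<subseteq> R" and Mm: "submod R M" using M(1) unfolding is_ideal_def by auto
  have "0 \<in> P" using P(1) unfolding is_ideal_def submod_def by blast
  then obtain p where p: "p \<in> P" "p \<noteq> 0" using P(2) by (rule ne0)
  have M0: "M \<noteq> {0}" using p M(2) by (intro ne0I[of p]) auto
  have ext: "M \<subseteq> t_op R M" by (rule t_ext[OF R M(1) M0])
  have sub: "t_op R M \<subseteq> M"
  proof
    fix y assume y: "y \<in> t_op R M"
    show "y \<in> M"
    proof (rule ccontr)
      assume yM: "y \<notin> M"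
      obtain G0 where G0: "finite G0" "gen R G0 \<subseteq> M" "gen R G0 \<noteq> {0}" "y \<in> v_op R (gen R G0)"
        using y by (rule t_opE)
      have yR: "y \<in> R" using v_sub[OF order.trans[OF G0(2) MR]] G0(4) by blast
      let ?Q = "ext_id R M y"
      have Qi: "is_ideal R ?Q" "M \<subseteq> ?Q" "y \<in> ?Q" using ext_id[OF R M(1) yR] by auto
      have "?Q \<notin> Z"
      proof
        assume "?Q \<in> Z"
        then have "?Q = M" using max Qi(2) by blast
        then show False using Qi(3) yM by blast
      qed
      then have "1 \<in> t_op R ?Q" unfolding Z_def using Qi M(2) by blast
      then obtain G where G: "finite G" "gen R G \<subseteq> ?Q" "1 \<in> v_op R (gen R G)"
        by (rule t_opE)
      have GQ: "\<forall>g\<in>G. \<exists>m\<in>M. \<exists>r\<in>R. g = m + y * r"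
        using G(2) gen_base[OF Rd(2), of G] unfolding ext_id_def by blast
      then have "\<forall>g\<in>G. \<exists>m. m \<in> M \<and> (\<exists>r. r \<in> R \<and> g = m + y * r)" by blast
      then obtain mm where mm: "\<forall>g\<in>G. mm g \<in> M \<and> (\<exists>r. r \<in> R \<and> g = mm g + y * r)"
        by (rule bchoice[elim_format]) blast
      then have "\<forall>g\<in>G. \<exists>r. r \<in> R \<and> g = mm g + y * r" by blast
      then obtain rr where rr: "\<forall>g\<in>G. rr g \<in> R \<and> g = mm g + y * rr g"
        by (rule bchoice[elim_format]) blast
      have mr: "\<And>g. g \<in> G \<Longrightarrow> mm g \<in> M \<and> rr g \<in> R \<and> g = mm g + y * rr g"
        using mm rr by blast
      let ?H = "gen R (mm ` G \<union> G0)"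
      have HM: "?H \<subseteq> M"
        by (rule gen_sub[OF Mm]) (use mr G0(2) gen_base[OF Rd(2), of G0] in blast)
      have F0H: "gen R G0 \<subseteq> ?H" by (rule gen_mono) blast
      have "0 \<in> gen R G0" using gen_submod[OF R, of G0] unfolding submod_def by blast
      then obtain q where q: "q \<in> gen R G0" "q \<noteq> 0" using G0(3) by (rule ne0)
      have H0: "?H \<noteq> {0}" using q F0H by (intro ne0I[of q]) auto
      have Hfin: "fin_gen R ?H" unfolding fin_gen_def using G0(1) G(1)
        by (intro exI[of _ "mm ` G \<union> G0"]) simp
      have vHs: "submod R (v_op R ?H)" by (rule v_submod[OF R])
      have yH: "y \<in> v_op R ?H" using G0(4) v_mono[OF F0H] by blast
      have "G \<subseteq> v_op R ?H"
      proof
        fix g assume g: "g \<in> G"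
        have "mm g \<in> ?H" using gen_base[OF Rd(2), of "mm ` G \<union> G0"] g by blast
        then have m: "mm g \<in> v_op R ?H" using v_ext by blast
        have "rr g * y \<in> v_op R ?H" using vHs mr[OF g] yH unfolding submod_def by blast
        then have "mm g + rr g * y \<in> v_op R ?H" using vHs m unfolding submod_def by blast
        then show "g \<in> v_op R ?H" using mr[OF g] by (simp add: mult.commute)
      qed
      then have "gen R G \<subseteq> v_op R ?H" by (rule gen_sub[OF vHs])
      then have "v_op R (gen R G) \<subseteq> v_op R (v_op R ?H)" by (rule v_mono)
      then have "v_op R (gen R G) \<subseteq> v_op R ?H" unfolding v_idem .
      then have "1 \<in> v_op R ?H" using G(3) by blast
      moreover have "v_op R ?H \<subseteq> t_op R M" by (rule t_op_intro[OF HM H0 Hfin])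
      ultimately show False using M(3) by blast
    qed
  qed
  have MneR: "M \<noteq> R"
  proof
    assume "M = R" then have "1 \<in> M" using Rd(2) by simp
    then show False using ext M(3) by blast
  qed
  have tM: "t_ideal R M" unfolding t_ideal_def using M(1) M0 ext sub by blast
  have "\<forall>Q. t_ideal R Q \<and> Q \<noteq> R \<and> M \<subseteq> Q \<longrightarrow> Q = M"
  proof (intro allI impI)
    fix Q assume Q: "t_ideal R Q \<and> Q \<noteq> R \<and> M \<subseteq> Q"
    have "1 \<notin> Q" using Q ideal_one unfolding t_ideal_def by blast
    then have "1 \<notin> t_op R Q" using Q unfolding t_ideal_def by simp
    then have "Q \<in> Z" unfolding Z_def using Q M(2) unfolding t_ideal_def by blast
    then show "Q = M" using max Q by blast
  qed
  then have "max_t_ideal R M" unfolding max_t_ideal_def using tM MneR by blast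
  then show ?thesis using M(2) by blast
qed


lemma notinM:
  assumes R: "subring R" and M: "max_t_ideal R M" and g: "g \<in> Nv R" and gM: "\<And>i. coeff g i \<in> M"
  shows False
proof -
  have Mi: "is_ideal R M" "t_op R M = M" "M \<noteq> R" using M unfolding max_t_ideal_def t_ideal_def by auto
  have Mm: "submod R M" using Mi(1) unfolding is_ideal_def by blast
  have g0: "g \<noteq> 0" and gv: "v_op R (content_ideal R g) = R" using g unfolding Nv_def by auto
  have cM: "content_ideal R g \<subseteq> M" by (rule content_sub[OF Mm gM])
  have ne: "content_ideal R g \<noteq> {0}" by (rule content_ne[OF subringD(2)[OF R] g0])
  have "v_op R (content_ideal R g) \<subseteq> t_op R M" by (rule t_op_intro[OF cM ne content_fin])
  then have "R \<subseteq> M" using gv Mi(2) by simp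
  then show False using Mi(1,3) unfolding is_ideal_def by blast
qed

lemma zero_prime:
  assumes R: "subring R" shows "prime_ideal R {0}"
  unfolding prime_ideal_def is_ideal_def submod_def
  using subringD[OF R] by auto

lemma polys_over_zero: "p \<in> polys_over {0} \<Longrightarrow> p = 0"
  unfolding polys_over_def by (auto intro: poly_eqI)

lemma ext_satD:
  assumes "g \<in> ext_sat R S" "prime_ideal R P" "polys_over P \<inter> S = {}"
  shows "g \<notin> polys_over P"
  using assms unfolding ext_sat_def by blast

theorem theorem2p1:
  fixes D :: "'k::field set" and S :: "'k poly set" and R :: "'k set"
  assumes "domain_with_qf D"
    and "mult_subset D S"
    and "R = circ D S D"
  shows "t_linked D (circ D S) R
       \<and> S \<subseteq> Nv R
       \<and> circ D S R = R
       \<and> ((\<forall>E\<in>Fbar R. circ D S E = w_op R E) \<longleftrightarrow> ext_sat R S = Nv R)"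
proof -
  have D: "subring D" using assms(1) unfolding domain_with_qf_def by blast
  have qf: "\<And>x. \<exists>a\<in>D. \<exists>b\<in>D. b \<noteq> 0 \<and> x = a / b" using assms(1) unfolding domain_with_qf_def by blast
  note S = assms(2)
  note Rdef = assms(3)
  have Rs: "subring R" unfolding Rdef by (rule R_subring[OF D S])
  note Rd = subringD[OF Rs]
  have DR: "D \<subseteq> R" unfolding Rdef by (rule D_sub_R[OF D S])
  have SD: "S \<subseteq> polys_over D" and S1: "1 \<in> S" and S0: "0 \<notin> S"
    and Smul: "\<And>f g. f \<in> S \<Longrightarrow> g \<in> S \<Longrightarrow> f * g \<in> S"
    using S unfolding mult_subset_def by auto
  have SR: "S \<subseteq> polys_over R" using SD polys_over_mono[OF DR] by blast
  have SNv: "S \<subseteq> Nv R" unfolding Rdef using S_Nv[OF D S] by blast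
  have RR: "submod R R" by (rule subring_submod[OF Rs])
  have subD: "\<And>E. submod R E \<Longrightarrow> submod D E" using DR ideal_submod_mono by blast
  have p1: "t_linked D (circ D S) R" unfolding Rdef by (rule t_linked_R[OF D S])
  have p3: "circ D S R = R" unfolding Rdef by (rule circ_R[OF D S])
  have sat_sub: "ext_sat R S \<subseteq> Nv R"
  proof
    fix g assume g: "g \<in> ext_sat R S"
    have gR: "g \<in> polys_over R" using g unfolding ext_sat_def by blast
    have "polys_over {0} \<inter> S = {}" using S0 polys_over_zero by blast
    then have "g \<notin> polys_over {0}" by (rule ext_satD[OF g zero_prime[OF Rs]])
    then have g0: "g \<noteq> 0" unfolding polys_over_def by auto
    let ?C = "content_ideal R g"
    have Cm: "submod R ?C" unfolding content_ideal_def by (rule gen_submod[OF Rs])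
    have CR: "?C \<subseteq> R" by (rule content_sub[OF RR]) (use gR in \<open>auto simp: polys_over_def\<close>)
    have Ci: "is_ideal R ?C" using Cm CR unfolding is_ideal_def by blast
    have "v_op R ?C = R"
    proof (cases "\<exists>s\<in>S. s \<in> polys_over ?C")
      case True
      then obtain s where s: "s \<in> S" "s \<in> polys_over ?C" by blast
      have "content_ideal R s \<subseteq> ?C" by (rule content_sub[OF Cm]) (use s(2) in \<open>auto simp: polys_over_def\<close>)
      then have "v_op R (content_ideal R s) \<subseteq> v_op R ?C" by (rule v_mono)
      moreover have "v_op R (content_ideal R s) = R" using SNv s(1) unfolding Nv_def by blast
      ultimately show ?thesis using v_sub[OF CR] by blast
    next
      case False
      then have "polys_over ?C \<inter> S = {}" by blast
      then obtain P where P: "prime_ideal R P" "?C \<subseteq> P" "polys_over P \<inter> S = {}"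
        using prime_zorn[OF Rs SR S1 Smul Ci] by blast
      have "g \<in> polys_over P" unfolding polys_over_def
        using P(2) coeff_in_content[OF Rd(2), of g] by blast
      then show ?thesis using ext_satD[OF g P(1,3)] by blast
    qed
    then show "g \<in> Nv R" unfolding Nv_def using gR g0 by blast
  qed
  have p4: "(\<forall>E\<in>Fbar R. circ D S E = w_op R E) \<longleftrightarrow> ext_sat R S = Nv R"
  proof
    assume H: "\<forall>E\<in>Fbar R. circ D S E = w_op R E"
    show "ext_sat R S = Nv R"
    proof (rule equalityI[OF sat_sub], rule subsetI)
      fix g assume g: "g \<in> Nv R"
      have gR: "g \<in> polys_over R" and g0: "g \<noteq> 0" using g unfolding Nv_def by auto
      have "g \<notin> polys_over P" if P: "prime_ideal R P" "polys_over P \<inter> S = {}" for P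
      proof
        assume gP: "g \<in> polys_over P"
        have Pi: "is_ideal R P" using P(1) unfolding prime_ideal_def by blast
        have Pm: "submod R P" and PR: "P \<subseteq> R" using Pi unfolding is_ideal_def by auto
        have "coeff g (degree g) \<noteq> 0" using g0 by simp
        moreover have "coeff g (degree g) \<in> P" using gP unfolding polys_over_def by blast
        ultimately have P0: "P \<noteq> {0}" by (intro ne0I[of "coeff g (degree g)"])
        have PF: "P \<in> Fbar R" unfolding Fbar_def using Pm P0 by blast
        have "1 \<in> w_op R P" unfolding w_op_def
        proof (rule InterI)
          fix L assume "L \<in> {loc R P M |M. max_t_ideal R M}"
          then obtain M where L: "L = loc R P M" and M: "max_t_ideal R M" by blast
          have "\<not> (\<forall>i. coeff g i \<in> M)" using notinM[OF Rs M g] by blast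
          then obtain i where i: "coeff g i \<notin> M" by blast
          have Mi: "is_ideal R M" using M unfolding max_t_ideal_def t_ideal_def by blast
          have "0 \<in> M" using Mi unfolding is_ideal_def submod_def by blast
          then have ne: "coeff g i \<noteq> 0" using i by metis
          have cP: "coeff g i \<in> P" using gP unfolding polys_over_def by blast
          have "1 = coeff g i / coeff g i" using ne by simp
          then show "1 \<in> L" unfolding L loc_def using cP PR i
            by (intro CollectI bexI[of _ "coeff g i"]) auto
        qed
        then have "1 \<in> circ D S P" using H PF by blast
        then obtain s where s: "s \<in> S" "\<forall>i. 1 * coeff s i \<in> P"
          using circ_iff[OF D subD[OF Pm]] by blast
        have "s \<in> polys_over P" using s(2) unfolding polys_over_def by simp
        then show False using s(1) P(2) by blast
      qed
      then show "g \<in> ext_sat R S" unfolding ext_sat_def using gR by blast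
    qed
  next
    assume H: "ext_sat R S = Nv R"
    show "\<forall>E\<in>Fbar R. circ D S E = w_op R E"
    proof
      fix E assume "E \<in> Fbar R"
      then have Em: "submod R E" and E0: "E \<noteq> {0}" unfolding Fbar_def by auto
      have ED: "submod D E" by (rule subD[OF Em])
      note Ed = Em[unfolded submod_def]
      show "circ D S E = w_op R E"
      proof
        show "circ D S E \<subseteq> w_op R E"
        proof
          fix x assume "x \<in> circ D S E"
          then obtain s where s: "s \<in> S" "\<forall>i. x * coeff s i \<in> E" using circ_iff[OF D ED] by blast
          show "x \<in> w_op R E" unfolding w_op_def
          proof (rule InterI)
            fix L assume "L \<in> {loc R E M |M. max_t_ideal R M}"
            then obtain M where L: "L = loc R E M" and M: "max_t_ideal R M" by blast
            have "\<not> (\<forall>i. coeff s i \<in> M)" using notinM[OF Rs M] SNv s(1) by blast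
            then obtain i where i: "coeff s i \<notin> M" by blast
            have Mi: "is_ideal R M" using M unfolding max_t_ideal_def t_ideal_def by blast
            have "0 \<in> M" using Mi unfolding is_ideal_def submod_def by blast
            then have ne: "coeff s i \<noteq> 0" using i by metis
            have cR: "coeff s i \<in> R" using SR s(1) unfolding polys_over_def by blast
            have "x = (x * coeff s i) / coeff s i" using ne by simp
            then show "x \<in> L" unfolding L loc_def using s(2) cR i
              by (intro CollectI bexI[of _ "x * coeff s i"] bexI[of _ "coeff s i"]) auto
          qed
        qed
      next
        show "w_op R E \<subseteq> circ D S E"
        proof
          fix x assume x: "x \<in> w_op R E"
          have xM: "x \<in> loc R E M" if "max_t_ideal R M" for M
            using x that unfolding w_op_def by blast
          define J where "J = {r \<in> R. r * x \<in> E}"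
          have Ji: "is_ideal R J" unfolding is_ideal_def submod_def J_def
          proof (intro conjI ballI)
            show "0 \<in> {r \<in> R. r * x \<in> E}" using Rd(1) Ed by simp
          next
            fix r1 r2 assume "r1 \<in> {r \<in> R. r * x \<in> E}" "r2 \<in> {r \<in> R. r * x \<in> E}"
            then have "r1 \<in> R" "r2 \<in> R" "r1 * x \<in> E" "r2 * x \<in> E" by auto
            moreover have "(r1 + r2) * x = r1 * x + r2 * x" by (simp add: distrib_right)
            ultimately show "r1 + r2 \<in> {r \<in> R. r * x \<in> E}" using Rd(3) Ed by auto
          next
            fix a r assume a: "a \<in> R" and "r \<in> {r \<in> R. r * x \<in> E}"
            then have rr: "r \<in> R" "r * x \<in> E" by auto
            have "a * (r * x) \<in> E" using Ed a rr(2) by blast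
            then have "(a * r) * x \<in> E" by (simp add: mult.assoc)
            moreover have "a * r \<in> R" using Rd(4) a rr(1) by blast
            ultimately show "a * r \<in> {r \<in> R. r * x \<in> E}" by simp
          qed auto
          have "0 \<in> E" using Ed by blast
          then obtain e where e: "e \<in> E" "e \<noteq> 0" using E0 by (rule ne0)
          obtain a b where ab: "a \<in> D" "b \<in> D" "b \<noteq> 0" "x = a / b" using qf[of x] by blast
          obtain c d where cd: "c \<in> D" "d \<in> D" "d \<noteq> 0" "e = c / d" using qf[of e] by blast
          have c_eq: "c = d * e" using cd by simp
          have c0: "c \<noteq> 0" using cd e by simp
          have cE: "c \<in> E" unfolding c_eq using Ed cd(2) DR e(1) by blast
          have "b * c \<in> J"
          proof -
            have bcR: "b * c \<in> R" using Rd(4) ab(2) cd(1) DR by blast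
            have eq: "(b * c) * x = a * c" using ab by simp
            have acE: "a * c \<in> E" using Ed ab(1) DR cE by blast
            have "(b * c) * x \<in> E" unfolding eq by (rule acE)
            then show ?thesis unfolding J_def using bcR by blast
          qed
          moreover have "b * c \<noteq> 0" using ab(3) c0 by simp
          ultimately have J0: "J \<noteq> {0}" by (intro ne0I[of "b * c"])
          have JM: "\<not> J \<subseteq> M" if M: "max_t_ideal R M" for M
          proof
            assume JM: "J \<subseteq> M"
            obtain e' s' where es: "e' \<in> E" "s' \<in> R - M" "x = e' / s'"
              using xM[OF M] unfolding loc_def by blast
            have Mi: "is_ideal R M" using M unfolding max_t_ideal_def t_ideal_def by blast
            have "0 \<in> M" using Mi unfolding is_ideal_def submod_def by blast
            then have "s' \<noteq> 0" using es(2) by auto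
            then have "s' * x = e'" using es(3) by simp
            then have "s' \<in> J" unfolding J_def using es by simp
            then show False using JM es(2) by blast
          qed
          show "x \<in> circ D S E"
          proof (cases "\<exists>s\<in>S. s \<in> polys_over J")
            case True
            then obtain s where s: "s \<in> S" "s \<in> polys_over J" by blast
            have "\<forall>i. x * coeff s i \<in> E" using s(2) unfolding polys_over_def J_def
              by (auto simp: mult.commute)
            then show ?thesis using circ_iff[OF D ED] s(1) by blast
          next
            case False
            then have "polys_over J \<inter> S = {}" by blast
            then obtain P where P: "prime_ideal R P" "J \<subseteq> P" "polys_over P \<inter> S = {}"
              using prime_zorn[OF Rs SR S1 Smul Ji] by blast
            have Pi: "is_ideal R P" using P(1) unfolding prime_ideal_def by blast
            have PR: "P \<subseteq> R" and P0in: "0 \<in> P" using Pi unfolding is_ideal_def submod_def by auto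
            have nt: "1 \<notin> t_op R P"
            proof
              assume "1 \<in> t_op R P"
              then obtain G where G: "finite G" "gen R G \<subseteq> P" "gen R G \<noteq> {0}" "1 \<in> v_op R (gen R G)"
                by (rule t_opE)
              obtain xs where xs: "set xs = G" using finite_list[OF G(1)] by blast
              define g where "g = Poly xs"
              have GP: "G \<subseteq> P" using G(2) gen_base[OF Rd(2), of G] by blast
              have cg: "coeff g i \<in> insert 0 G" for i
                unfolding g_def using xs by (auto simp: nth_default_def)
              have gP: "g \<in> polys_over P" unfolding polys_over_def
              proof (intro CollectI allI)
                fix i show "coeff g i \<in> P" using cg[of i] GP P0in by (cases "coeff g i = 0") auto
              qed
              have gR: "g \<in> polys_over R" using gP polys_over_mono[OF PR] by blast
              have Grange: "G \<subseteq> range (coeff g)"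
              proof
                fix z assume "z \<in> G"
                then obtain k where "k < length xs" "z = xs ! k" using xs by (auto simp: in_set_conv_nth)
                then have "coeff g k = z" unfolding g_def by (simp add: nth_default_def)
                then show "z \<in> range (coeff g)" by (metis rangeI)
              qed
              have Gsub: "gen R G \<subseteq> content_ideal R g" unfolding content_ideal_def
                by (rule gen_mono[OF Grange])
              have cR: "content_ideal R g \<subseteq> R"
                by (rule content_sub[OF RR]) (use gR in \<open>auto simp: polys_over_def\<close>)
              have "1 \<in> v_op R (content_ideal R g)" using G(4) v_mono[OF Gsub] by blast
              then have gv: "v_op R (content_ideal R g) = R" by (rule v_one[OF Rs _ cR])
              have "g \<noteq> 0"
              proof
                assume "g = 0"
                then have "G \<subseteq> {0}" using Grange by auto
                then have "gen R G \<subseteq> {0}"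
                  by (intro gen_sub) (auto simp: submod_def)
                moreover have "0 \<in> gen R G" using gen_submod[OF Rs, of G] unfolding submod_def by blast
                ultimately show False using G(3) by blast
              qed
              then have "g \<in> Nv R" unfolding Nv_def using gR gv by blast
              then have "g \<in> ext_sat R S" using H by simp
              then show False using ext_satD[OF _ P(1,3)] gP by blast
            qed
            have "0 \<in> J" using Ji unfolding is_ideal_def submod_def by blast
            then obtain r where r: "r \<in> J" "r \<noteq> 0" using J0 by (rule ne0)
            have P0: "P \<noteq> {0}" using r P(2) by (intro ne0I[of r]) auto
            obtain M where M: "max_t_ideal R M" "P \<subseteq> M" using t_zorn[OF Rs Pi P0 nt] by blast
            then show ?thesis using JM[OF M(1)] P(2) by blast
          qed
        qed
      qed
    qed
  qed
  show ?thesis using p1 SNv p3 p4 by blast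
qed

end
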